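(* Let $V$ be a commutative unital quantale whose underlying lattice is a frame and in which $k=\top$. Let $(X,a)$, $(Y,b)$ be $V$-groups and $\varphi\colon Y\to\mathrm{Aut}(X)$ a group action such that $\varphi_y\colon(X,a)\to(X,a)$ is a $V$-functor for every $y\in Y$. Define $\mathrm{lex}\colon(X\times Y)\times(X\times Y)\to V$ by $\mathrm{lex}((x,y),(x',y'))=a(x,x')$ if $y=y'$ and $\mathrm{lex}((x,y),(x',y'))=b(y,y')$ if $y\neq y'$. The following are equivalent: (i) $(X,a)\xrightarrow{\langle 1,0\rangle}(X\rtimes_\varphi Y,\mathrm{lex})\underset{\langle 0,1\rangle}{\overset{\pi_2}{\rightleftarrows}}(Y,b)$ is a split extension in $\mathsf{VGrp}$; (ii) for all $x\in X$ and all $y\in Y\setminus\{0\}$, $b(y,0)\otimes b(0,y)\le a(x,0)$.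
   Context: A commutative unital quantale $V$ is a complete lattice with a commutative associative operation $\otimes$ with unit $k$ preserving arbitrary joins in each variable. A $V$-category $(X,a)$: $a\colon X\times X\to V$ with $k\le a(x,x)$ and $a(x,x')\otimes a(x',x'')\le a(x,x'')$; a $V$-functor is a map $f$ with $a(x,x')\le b(f(x),f(x'))$. A $V$-group $(X,a,+)$ is a $V$-category with a group structure (additive, not necessarily abelian) such that $a(x_1,x_2)\otimes a(x_1',x_2')\le a(x_1+x_1',x_2+x_2')$; $V$-homomorphisms are group homomorphisms that are $V$-functors; category $\mathsf{VGrp}$ (pointed since $k=\top$). The semidirect product $X\rtimes_\varphi Y$ is $X\times Y$ with $(x,y)+(x',y')=(x+\varphi_y(x'),y+y')$, $\varphi_y=\varphi(y)$; $\langle 1,0\rangle(x)=(x,0)$, $\langle 0,1\rangle(y)=(0,y)$, $\pi_2(x,y)=y$. A split extension in $\mathsf{VGrp}$ means: the structure on the middle object makes it a $V$-group, all three maps are $V$-homomorphisms, $\pi_2\circ\langle 0,1\rangle=1_Y$, and $\langle 1,0\rangle$ is a kernel of $\pi_2$ in $\mathsf{VGrp}$. *)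

theory Defs
  imports "HOL-Algebra.Group_Action"
begin

definition quantale :: "('v::complete_lattice \<Rightarrow> 'v \<Rightarrow> 'v) \<Rightarrow> 'v \<Rightarrow> bool" where
  "quantale t k \<longleftrightarrow>
     (\<forall>u v. t u v = t v u) \<and>
     (\<forall>u v w. t (t u v) w = t u (t v w)) \<and>
     (\<forall>u. t k u = u \<and> t u k = u) \<and>
     (\<forall>u S. t u (Sup S) = Sup (t u ` S)) \<and>
     (\<forall>u S. t (Sup S) u = Sup ((\<lambda>s. t s u) ` S))"

definition frame_lattice :: "'v::complete_lattice itself \<Rightarrow> bool" where
  "frame_lattice _ \<longleftrightarrow> (\<forall>(u::'v) S. inf u (Sup S) = Sup (inf u ` S))"

definition vcat :: "('v::complete_lattice \<Rightarrow> 'v \<Rightarrow> 'v) \<Rightarrow> 'v \<Rightarrow> 'x set \<Rightarrow> ('x \<Rightarrow> 'x \<Rightarrow> 'v) \<Rightarrow> bool" where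
  "vcat t k X a \<longleftrightarrow>
     (\<forall>x\<in>X. k \<le> a x x) \<and>
     (\<forall>x\<in>X. \<forall>x'\<in>X. \<forall>x''\<in>X. t (a x x') (a x' x'') \<le> a x x'')"

definition vfunctor :: "'x set \<Rightarrow> ('x \<Rightarrow> 'x \<Rightarrow> 'v::complete_lattice) \<Rightarrow> 'y set \<Rightarrow> ('y \<Rightarrow> 'y \<Rightarrow> 'v) \<Rightarrow> ('x \<Rightarrow> 'y) \<Rightarrow> bool" where
  "vfunctor X a Y b f \<longleftrightarrow> f \<in> X \<rightarrow> Y \<and> (\<forall>x\<in>X. \<forall>x'\<in>X. a x x' \<le> b (f x) (f x'))"

text \<open>A V-group: a group (written multiplicatively in HOL-Algebra; the paper writes it
additively) with a V-category structure compatible with the group operation.\<close>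
definition vgroup :: "('v::complete_lattice \<Rightarrow> 'v \<Rightarrow> 'v) \<Rightarrow> 'v \<Rightarrow> 'x monoid \<Rightarrow> ('x \<Rightarrow> 'x \<Rightarrow> 'v) \<Rightarrow> bool" where
  "vgroup t k G a \<longleftrightarrow> group G \<and> vcat t k (carrier G) a \<and>
     (\<forall>x1\<in>carrier G. \<forall>x2\<in>carrier G. \<forall>x1'\<in>carrier G. \<forall>x2'\<in>carrier G.
        t (a x1 x2) (a x1' x2') \<le> a (x1 \<otimes>\<^bsub>G\<^esub> x1') (x2 \<otimes>\<^bsub>G\<^esub> x2'))"

definition vhom :: "'x monoid \<Rightarrow> ('x \<Rightarrow> 'x \<Rightarrow> 'v::complete_lattice) \<Rightarrow> 'y monoid \<Rightarrow> ('y \<Rightarrow> 'y \<Rightarrow> 'v) \<Rightarrow> ('x \<Rightarrow> 'y) \<Rightarrow> bool" where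
  "vhom G a H b f \<longleftrightarrow> f \<in> hom G H \<and> vfunctor (carrier G) a (carrier H) b f"

text \<open>The universal property quantifies over test V-groups whose carrier lives in type 'z.\<close>
definition vgrp_kernel ::
  "'z itself \<Rightarrow> ('v::complete_lattice \<Rightarrow> 'v \<Rightarrow> 'v) \<Rightarrow> 'v \<Rightarrow>
   'k monoid \<Rightarrow> ('k \<Rightarrow> 'k \<Rightarrow> 'v) \<Rightarrow> 'g monoid \<Rightarrow> ('g \<Rightarrow> 'g \<Rightarrow> 'v) \<Rightarrow> 'h monoid \<Rightarrow>
   ('k \<Rightarrow> 'g) \<Rightarrow> ('g \<Rightarrow> 'h) \<Rightarrow> bool" where
  "vgrp_kernel _ t k K c G a H \<kappa> f \<longleftrightarrow>
     (\<forall>x\<in>carrier K. f (\<kappa> x) = \<one>\<^bsub>H\<^esub>) \<and>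
     (\<forall>(Z::'z monoid) d g. vgroup t k Z d \<and> vhom Z d G a g \<and> (\<forall>z\<in>carrier Z. f (g z) = \<one>\<^bsub>H\<^esub>) \<longrightarrow>
        (\<exists>h. vhom Z d K c h \<and> (\<forall>z\<in>carrier Z. \<kappa> (h z) = g z) \<and>
             (\<forall>h'. vhom Z d K c h' \<and> (\<forall>z\<in>carrier Z. \<kappa> (h' z) = g z) \<longrightarrow>
                   (\<forall>z\<in>carrier Z. h' z = h z))))"

definition vgrp_split_ext ::
  "'z itself \<Rightarrow> ('v::complete_lattice \<Rightarrow> 'v \<Rightarrow> 'v) \<Rightarrow> 'v \<Rightarrow>
   'x monoid \<Rightarrow> ('x \<Rightarrow> 'x \<Rightarrow> 'v) \<Rightarrow> 'm monoid \<Rightarrow> ('m \<Rightarrow> 'm \<Rightarrow> 'v) \<Rightarrow> 'y monoid \<Rightarrow> ('y \<Rightarrow> 'y \<Rightarrow> 'v) \<Rightarrow>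
   ('x \<Rightarrow> 'm) \<Rightarrow> ('m \<Rightarrow> 'y) \<Rightarrow> ('y \<Rightarrow> 'm) \<Rightarrow> bool" where
  "vgrp_split_ext Z t k X a M m Y b \<kappa> p s \<longleftrightarrow>
     vgroup t k M m \<and> vhom X a M m \<kappa> \<and> vhom M m Y b p \<and> vhom Y b M m s \<and>
     (\<forall>y\<in>carrier Y. p (s y) = y) \<and>
     vgrp_kernel Z t k X a M m Y \<kappa> p"

definition semidirect :: "'x monoid \<Rightarrow> 'y monoid \<Rightarrow> ('y \<Rightarrow> 'x \<Rightarrow> 'x) \<Rightarrow> ('x \<times> 'y) monoid" where
  "semidirect X Y \<phi> =
     \<lparr> carrier = carrier X \<times> carrier Y,
       mult = (\<lambda>(x, y) (x', y'). (x \<otimes>\<^bsub>X\<^esub> \<phi> y x', y \<otimes>\<^bsub>Y\<^esub> y')),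
       one = (\<one>\<^bsub>X\<^esub>, \<one>\<^bsub>Y\<^esub>) \<rparr>"

definition lex :: "('x \<Rightarrow> 'x \<Rightarrow> 'v) \<Rightarrow> ('y \<Rightarrow> 'y \<Rightarrow> 'v) \<Rightarrow> ('x \<times> 'y) \<Rightarrow> ('x \<times> 'y) \<Rightarrow> 'v" where
  "lex a b = (\<lambda>(x, y) (x', y'). if y = y' then a x x' else b y y')"

definition inj1 :: "'y monoid \<Rightarrow> 'x \<Rightarrow> 'x \<times> 'y" where
  "inj1 Y = (\<lambda>x. (x, \<one>\<^bsub>Y\<^esub>))"

definition inj2 :: "'x monoid \<Rightarrow> 'y \<Rightarrow> 'x \<times> 'y" where
  "inj2 X = (\<lambda>y. (\<one>\<^bsub>X\<^esub>, y))"

end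

theory Submission imports Defs begin

lemma q_mono2:
  assumes "quantale t k" "v \<le> w" shows "t u v \<le> t u w"
proof -
  have "t u (Sup {v,w}) = Sup (t u ` {v,w})" using assms(1) unfolding quantale_def by blast
  moreover have "Sup {v,w} = w" using assms(2) by (simp add: sup_absorb2)
  ultimately have "t u w = sup (t u v) (t u w)" by simp
  thus ?thesis by (metis sup.cobounded1)
qed

lemma q_mono1:
  assumes "quantale t k" "v \<le> w" shows "t v u \<le> t w u"
  using q_mono2[OF assms] assms(1) unfolding quantale_def by metis

lemma q_mono:
  assumes "quantale t k" "u \<le> u'" "v \<le> v'" shows "t u v \<le> t u' v'"
  by (meson assms order_trans q_mono1 q_mono2)

lemma q_le1:
  assumes "quantale t k" "k = Orderings.top" shows "t u v \<le> u"
  using q_mono2[OF assms(1), of v Orderings.top u] assms unfolding quantale_def by simp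

lemma q_le2:
  assumes "quantale t k" "k = Orderings.top" shows "t u v \<le> v"
  using q_mono1[OF assms(1), of u Orderings.top v] assms unfolding quantale_def by simp

lemma q_top1:
  assumes "quantale t k" "k = Orderings.top" shows "t Orderings.top v = v"
  using assms unfolding quantale_def by simp

lemma q_top2:
  assumes "quantale t k" "k = Orderings.top" shows "t v Orderings.top = v"
  using assms unfolding quantale_def by simp

lemma vg_left:
  assumes q: "quantale t k" and kt: "k = Orderings.top" and vg: "vgroup t k G c"
    and u: "u \<in> carrier G" and v: "v \<in> carrier G" and w: "w \<in> carrier G"
  shows "c u v \<le> c (w \<otimes>\<^bsub>G\<^esub> u) (w \<otimes>\<^bsub>G\<^esub> v)"
proof -
  have "c w w = Orderings.top" using vg w kt unfolding vgroup_def vcat_def by (simp add: top_unique)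
  hence "c u v = t (c w w) (c u v)" using q_top1[OF q kt] by simp
  also have "\<dots> \<le> c (w \<otimes>\<^bsub>G\<^esub> u) (w \<otimes>\<^bsub>G\<^esub> v)" using vg u v w unfolding vgroup_def by blast
  finally show ?thesis .
qed

lemma vg_right:
  assumes q: "quantale t k" and kt: "k = Orderings.top" and vg: "vgroup t k G c"
    and u: "u \<in> carrier G" and v: "v \<in> carrier G" and w: "w \<in> carrier G"
  shows "c u v \<le> c (u \<otimes>\<^bsub>G\<^esub> w) (v \<otimes>\<^bsub>G\<^esub> w)"
proof -
  have "c w w = Orderings.top" using vg w kt unfolding vgroup_def vcat_def by (simp add: top_unique)
  hence "c u v = t (c u v) (c w w)" using q_top2[OF q kt] by simp
  also have "\<dots> \<le> c (u \<otimes>\<^bsub>G\<^esub> w) (v \<otimes>\<^bsub>G\<^esub> w)" using vg u v w unfolding vgroup_def by blast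
  finally show ?thesis .
qed

lemma vg_refl:
  assumes kt: "k = Orderings.top" and vg: "vgroup t k G c" and w: "w \<in> carrier G"
  shows "c w w = Orderings.top"
  using vg w kt unfolding vgroup_def vcat_def by (simp add: top_unique)

lemma vg_shift1:
  assumes q: "quantale t k" and kt: "k = Orderings.top" and vg: "vgroup t k G c"
    and u: "u \<in> carrier G" and v: "v \<in> carrier G"
  shows "c (u \<otimes>\<^bsub>G\<^esub> inv\<^bsub>G\<^esub> v) \<one>\<^bsub>G\<^esub> \<le> c u v"
proof -
  interpret G: group G using vg unfolding vgroup_def by blast
  have "c (u \<otimes>\<^bsub>G\<^esub> inv\<^bsub>G\<^esub> v) \<one>\<^bsub>G\<^esub> \<le> c (u \<otimes>\<^bsub>G\<^esub> inv\<^bsub>G\<^esub> v \<otimes>\<^bsub>G\<^esub> v) (\<one>\<^bsub>G\<^esub> \<otimes>\<^bsub>G\<^esub> v)"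
    by (rule vg_right[OF q kt vg]) (use u v in auto)
  also have "u \<otimes>\<^bsub>G\<^esub> inv\<^bsub>G\<^esub> v \<otimes>\<^bsub>G\<^esub> v = u" using u v by (simp add: G.m_assoc)
  finally show ?thesis using v by simp
qed

lemma sd_group:
  assumes X: "group X" and Y: "group Y" and ga: "group_action Y (carrier X) \<phi>"
    and hm: "\<forall>y\<in>carrier Y. \<phi> y \<in> hom X X"
  shows "group (semidirect X Y \<phi>)"
proof -
  interpret X: group X by (rule X)
  interpret Y: group Y by (rule Y)
  interpret ga: group_action Y "carrier X" \<phi> by (rule ga)
  have gh: "group_hom X X (\<phi> y)" if "y \<in> carrier Y" for y
    using hm that X by (simp add: group_hom_def group_hom_axioms_def)
  have cl: "\<phi> y x \<in> carrier X" if "y \<in> carrier Y" "x \<in> carrier X" for x y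
    using ga.element_image that by blast
  have pm: "\<phi> y (x \<otimes>\<^bsub>X\<^esub> x') = \<phi> y x \<otimes>\<^bsub>X\<^esub> \<phi> y x'" if "y \<in> carrier Y" "x \<in> carrier X" "x' \<in> carrier X" for x x' y
    using hm that by (simp add: hom_mult)
  have p1: "\<phi> y \<one>\<^bsub>X\<^esub> = \<one>\<^bsub>X\<^esub>" if "y \<in> carrier Y" for y
    using group_hom.hom_one[OF gh[OF that]] .
  have po: "\<phi> \<one>\<^bsub>Y\<^esub> x = x" if "x \<in> carrier X" for x
    using ga.id_eq_one that by (metis restrict_apply')
  have pc: "\<phi> (y \<otimes>\<^bsub>Y\<^esub> y') x = \<phi> y (\<phi> y' x)" if "y \<in> carrier Y" "y' \<in> carrier Y" "x \<in> carrier X" for x y y'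
    using ga.composition_rule that by blast
  show ?thesis
  proof (rule groupI)
    fix p q assume "p \<in> carrier (semidirect X Y \<phi>)" "q \<in> carrier (semidirect X Y \<phi>)"
    then show "p \<otimes>\<^bsub>semidirect X Y \<phi>\<^esub> q \<in> carrier (semidirect X Y \<phi>)"
      by (auto simp: semidirect_def cl)
  next
    show "\<one>\<^bsub>semidirect X Y \<phi>\<^esub> \<in> carrier (semidirect X Y \<phi>)" by (simp add: semidirect_def)
  next
    fix p q r assume "p \<in> carrier (semidirect X Y \<phi>)" "q \<in> carrier (semidirect X Y \<phi>)" "r \<in> carrier (semidirect X Y \<phi>)"
    then show "p \<otimes>\<^bsub>semidirect X Y \<phi>\<^esub> q \<otimes>\<^bsub>semidirect X Y \<phi>\<^esub> r = p \<otimes>\<^bsub>semidirect X Y \<phi>\<^esub> (q \<otimes>\<^bsub>semidirect X Y \<phi>\<^esub> r)"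
      by (auto simp: semidirect_def cl pm pc X.m_assoc Y.m_assoc)
  next
    fix p assume "p \<in> carrier (semidirect X Y \<phi>)"
    then show "\<one>\<^bsub>semidirect X Y \<phi>\<^esub> \<otimes>\<^bsub>semidirect X Y \<phi>\<^esub> p = p"
      by (auto simp: semidirect_def po)
  next
    fix p assume "p \<in> carrier (semidirect X Y \<phi>)"
    then obtain x y where p: "p = (x, y)" "x \<in> carrier X" "y \<in> carrier Y" by (auto simp: semidirect_def)
    have "(\<phi> (inv\<^bsub>Y\<^esub> y) (inv\<^bsub>X\<^esub> x), inv\<^bsub>Y\<^esub> y) \<in> carrier (semidirect X Y \<phi>)"
      using p by (simp add: semidirect_def cl)
    moreover have "(\<phi> (inv\<^bsub>Y\<^esub> y) (inv\<^bsub>X\<^esub> x), inv\<^bsub>Y\<^esub> y) \<otimes>\<^bsub>semidirect X Y \<phi>\<^esub> p = \<one>\<^bsub>semidirect X Y \<phi>\<^esub>"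
      using p by (simp add: semidirect_def pm[symmetric] p1)
    ultimately show "\<exists>q\<in>carrier (semidirect X Y \<phi>). q \<otimes>\<^bsub>semidirect X Y \<phi>\<^esub> p = \<one>\<^bsub>semidirect X Y \<phi>\<^esub>" by blast
  qed
qed

theorem theorem7p4:
  fixes t :: "'v::complete_lattice \<Rightarrow> 'v \<Rightarrow> 'v" and k :: 'v
    and X :: "'x monoid" and a :: "'x \<Rightarrow> 'x \<Rightarrow> 'v"
    and Y :: "'y monoid" and b :: "'y \<Rightarrow> 'y \<Rightarrow> 'v"
    and \<phi> :: "'y \<Rightarrow> 'x \<Rightarrow> 'x"
  assumes "quantale t k" and "frame_lattice TYPE('v)" and "k = Orderings.top"
    and "vgroup t k X a" and "vgroup t k Y b"
    and "group_action Y (carrier X) \<phi>"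
    and "\<forall>y\<in>carrier Y. \<phi> y \<in> hom X X"
    and "\<forall>y\<in>carrier Y. vfunctor (carrier X) a (carrier X) a (\<phi> y)"
  shows "vgrp_split_ext TYPE('z) t k X a (semidirect X Y \<phi>) (lex a b) Y b (inj1 Y) snd (inj2 X)
     \<longleftrightarrow> (\<forall>x\<in>carrier X. \<forall>y\<in>carrier Y - {\<one>\<^bsub>Y\<^esub>}. t (b y \<one>\<^bsub>Y\<^esub>) (b \<one>\<^bsub>Y\<^esub> y) \<le> a x \<one>\<^bsub>X\<^esub>)"
proof -
  note q = assms(1) and kt = assms(3) and vX = assms(4) and vY = assms(5)
    and ga = assms(6) and hm = assms(7) and vf = assms(8)
  interpret X: group X using vX unfolding vgroup_def by blast
  interpret Y: group Y using vY unfolding vgroup_def by blast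
  interpret ga: group_action Y "carrier X" \<phi> by (rule ga)
  have gh: "group_hom X X (\<phi> y)" if "y \<in> carrier Y" for y
    using hm that X.group_axioms by (simp add: group_hom_def group_hom_axioms_def)
  have cl: "\<phi> y x \<in> carrier X" if "y \<in> carrier Y" "x \<in> carrier X" for x y
    using ga.element_image that by blast
  have p1: "\<phi> y \<one>\<^bsub>X\<^esub> = \<one>\<^bsub>X\<^esub>" if "y \<in> carrier Y" for y
    using group_hom.hom_one[OF gh[OF that]] .
  have po: "\<phi> \<one>\<^bsub>Y\<^esub> x = x" if "x \<in> carrier X" for x
    using ga.id_eq_one that by (metis restrict_apply')
  let ?S = "semidirect X Y \<phi>"
  have cS: "carrier ?S = carrier X \<times> carrier Y" by (simp add: semidirect_def)
  have mS: "(x, y) \<otimes>\<^bsub>?S\<^esub> (x', y') = (x \<otimes>\<^bsub>X\<^esub> \<phi> y x', y \<otimes>\<^bsub>Y\<^esub> y')" for x y x' y'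
    by (simp add: semidirect_def)
  have oS: "\<one>\<^bsub>?S\<^esub> = (\<one>\<^bsub>X\<^esub>, \<one>\<^bsub>Y\<^esub>)" by (simp add: semidirect_def)
  have lx: "lex a b (x, y) (x', y') = (if y = y' then a x x' else b y y')" for x y x' y'
    by (simp add: lex_def)
  have btop: "b y y = Orderings.top" if "y \<in> carrier Y" for y using vg_refl[OF kt vY that] .
  have atop: "a x x = Orderings.top" if "x \<in> carrier X" for x using vg_refl[OF kt vX that] .
  have lexb: "lex a b p p' \<le> b (snd p) (snd p')" if "p \<in> carrier ?S" "p' \<in> carrier ?S" for p p'
    using that btop by (cases p; cases p'; auto simp: lx cS)
  show ?thesis
  proof
    assume H: "vgrp_split_ext TYPE('z) t k X a ?S (lex a b) Y b (inj1 Y) snd (inj2 X)"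
    hence vS: "vgroup t k ?S (lex a b)" unfolding vgrp_split_ext_def by blast
    show "\<forall>x\<in>carrier X. \<forall>y\<in>carrier Y - {\<one>\<^bsub>Y\<^esub>}. t (b y \<one>\<^bsub>Y\<^esub>) (b \<one>\<^bsub>Y\<^esub> y) \<le> a x \<one>\<^bsub>X\<^esub>"
    proof (intro ballI)
      fix x y assume x: "x \<in> carrier X" and y: "y \<in> carrier Y - {\<one>\<^bsub>Y\<^esub>}"
      have "t (lex a b (x, y) (\<one>\<^bsub>X\<^esub>, \<one>\<^bsub>Y\<^esub>)) (lex a b (\<one>\<^bsub>X\<^esub>, \<one>\<^bsub>Y\<^esub>) (\<one>\<^bsub>X\<^esub>, y))
          \<le> lex a b ((x, y) \<otimes>\<^bsub>?S\<^esub> (\<one>\<^bsub>X\<^esub>, \<one>\<^bsub>Y\<^esub>)) ((\<one>\<^bsub>X\<^esub>, \<one>\<^bsub>Y\<^esub>) \<otimes>\<^bsub>?S\<^esub> (\<one>\<^bsub>X\<^esub>, y))"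
        using vS x y unfolding vgroup_def cS by blast
      thus "t (b y \<one>\<^bsub>Y\<^esub>) (b \<one>\<^bsub>Y\<^esub> y) \<le> a x \<one>\<^bsub>X\<^esub>"
        using x y by (auto simp: mS lx p1 po)
    qed
  next
    assume B0: "\<forall>x\<in>carrier X. \<forall>y\<in>carrier Y - {\<one>\<^bsub>Y\<^esub>}. t (b y \<one>\<^bsub>Y\<^esub>) (b \<one>\<^bsub>Y\<^esub> y) \<le> a x \<one>\<^bsub>X\<^esub>"
    have B: "t u v \<le> a x x'" if "z \<in> carrier Y" "z \<noteq> \<one>\<^bsub>Y\<^esub>" "u \<le> b z \<one>\<^bsub>Y\<^esub>" "v \<le> b \<one>\<^bsub>Y\<^esub> z"
      "x \<in> carrier X" "x' \<in> carrier X" for u v x x' z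
    proof -
      have "t u v \<le> t (b z \<one>\<^bsub>Y\<^esub>) (b \<one>\<^bsub>Y\<^esub> z)" using q_mono[OF q] that by blast
      also have "\<dots> \<le> a (x \<otimes>\<^bsub>X\<^esub> inv\<^bsub>X\<^esub> x') \<one>\<^bsub>X\<^esub>" using B0 that by auto
      also have "\<dots> \<le> a x x'" using vg_shift1[OF q kt vX] that by blast
      finally show ?thesis .
    qed
    have bl: "b y1 y2 \<le> b (inv\<^bsub>Y\<^esub> y2 \<otimes>\<^bsub>Y\<^esub> y1) \<one>\<^bsub>Y\<^esub>" if "y1 \<in> carrier Y" "y2 \<in> carrier Y" for y1 y2
      using vg_left[OF q kt vY that, of "inv\<^bsub>Y\<^esub> y2"] that by simp
    have bl': "b y1 y2 \<le> b \<one>\<^bsub>Y\<^esub> (inv\<^bsub>Y\<^esub> y1 \<otimes>\<^bsub>Y\<^esub> y2)" if "y1 \<in> carrier Y" "y2 \<in> carrier Y" for y1 y2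
      using vg_left[OF q kt vY that, of "inv\<^bsub>Y\<^esub> y1"] that by simp
    have br: "b y1 y2 \<le> b \<one>\<^bsub>Y\<^esub> (y2 \<otimes>\<^bsub>Y\<^esub> inv\<^bsub>Y\<^esub> y1)" if "y1 \<in> carrier Y" "y2 \<in> carrier Y" for y1 y2
      using vg_right[OF q kt vY that, of "inv\<^bsub>Y\<^esub> y1"] that by simp
    have ne: "inv\<^bsub>Y\<^esub> y2 \<otimes>\<^bsub>Y\<^esub> y1 \<noteq> \<one>\<^bsub>Y\<^esub>" if "y1 \<in> carrier Y" "y2 \<in> carrier Y" "y1 \<noteq> y2" for y1 y2
      using that by (metis Y.inv_comm Y.inv_equality Y.inv_inv Y.inv_closed)
    have grpS: "group ?S" by (rule sd_group[OF X.group_axioms Y.group_axioms ga hm])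
    have vcS: "vcat t k (carrier ?S) (lex a b)"
      unfolding vcat_def
    proof (intro conjI ballI)
      fix p assume "p \<in> carrier ?S" thus "k \<le> lex a b p p" using atop kt by (cases p) (auto simp: cS lx)
    next
      fix p p' p'' assume "p \<in> carrier ?S" "p' \<in> carrier ?S" "p'' \<in> carrier ?S"
      then obtain x y x' y' x'' y'' where P: "p = (x, y)" "p' = (x', y')" "p'' = (x'', y'')"
        and m: "x \<in> carrier X" "y \<in> carrier Y" "x' \<in> carrier X" "y' \<in> carrier Y" "x'' \<in> carrier X" "y'' \<in> carrier Y"
        by (auto simp: cS)
      have aT: "t (a x x') (a x' x'') \<le> a x x''" using vX m unfolding vgroup_def vcat_def by blast
      have bT: "t (b y y') (b y' y'') \<le> b y y''" using vY m unfolding vgroup_def vcat_def by blast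
      show "t (lex a b p p') (lex a b p' p'') \<le> lex a b p p''"
      proof (cases "y = y'")
        case True
        then show ?thesis using aT q_le2[OF q kt] by (auto simp: P lx)
      next
        case False
        show ?thesis
        proof (cases "y' = y''")
          case True
          then show ?thesis using False q_le1[OF q kt] by (auto simp: P lx)
        next
          case F2: False
          show ?thesis
          proof (cases "y = y''")
            case True
            have "t (b y y') (b y' y) \<le> a x x''"
              by (rule B[of "inv\<^bsub>Y\<^esub> y' \<otimes>\<^bsub>Y\<^esub> y"]) (use m False ne bl bl' in auto)
            then show ?thesis using True False F2 by (auto simp: P lx)
          next
            case F3: False
            then show ?thesis using bT False F2 by (auto simp: P lx)
          qed
        qed
      qed
    qed
    have compS: "t (lex a b p1 p2) (lex a b p1' p2') \<le> lex a b (p1 \<otimes>\<^bsub>?S\<^esub> p1') (p2 \<otimes>\<^bsub>?S\<^esub> p2')"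
      if "p1 \<in> carrier ?S" "p2 \<in> carrier ?S" "p1' \<in> carrier ?S" "p2' \<in> carrier ?S" for p1 p2 p1' p2'
    proof -
      obtain x1 y1 x2 y2 x1' y1' x2' y2' where P: "p1 = (x1, y1)" "p2 = (x2, y2)" "p1' = (x1', y1')" "p2' = (x2', y2')"
        by (cases p1; cases p2; cases p1'; cases p2') auto
      have m: "x1 \<in> carrier X" "y1 \<in> carrier Y" "x2 \<in> carrier X" "y2 \<in> carrier Y"
          "x1' \<in> carrier X" "y1' \<in> carrier Y" "x2' \<in> carrier X" "y2' \<in> carrier Y"
        using that by (auto simp: P cS)
      show ?thesis
      proof (cases "y1 = y2 \<and> y1' = y2'")
        case True
        have "t (a x1 x2) (a x1' x2') \<le> t (a x1 x2) (a (\<phi> y1 x1') (\<phi> y1 x2'))"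
          using vf m q_mono2[OF q] unfolding vfunctor_def by blast
        also have "\<dots> \<le> a (x1 \<otimes>\<^bsub>X\<^esub> \<phi> y1 x1') (x2 \<otimes>\<^bsub>X\<^esub> \<phi> y1 x2')"
          using vX m cl unfolding vgroup_def by blast
        finally show ?thesis using True by (simp add: P mS lx)
      next
        case False
        show ?thesis
        proof (cases "y1 \<otimes>\<^bsub>Y\<^esub> y1' = y2 \<otimes>\<^bsub>Y\<^esub> y2'")
          case eq: True
          have n1: "y1 \<noteq> y2" using False eq m by (metis Y.Units_eq Y.Units_l_cancel)
          have n2: "y1' \<noteq> y2'" using False eq m by (metis Y.right_cancel)
          have z: "inv\<^bsub>Y\<^esub> y2 \<otimes>\<^bsub>Y\<^esub> y1 = y2' \<otimes>\<^bsub>Y\<^esub> inv\<^bsub>Y\<^esub> y1'"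
          proof -
            have "inv\<^bsub>Y\<^esub> y2 \<otimes>\<^bsub>Y\<^esub> y1 = inv\<^bsub>Y\<^esub> y2 \<otimes>\<^bsub>Y\<^esub> (y1 \<otimes>\<^bsub>Y\<^esub> y1') \<otimes>\<^bsub>Y\<^esub> inv\<^bsub>Y\<^esub> y1'"
              using m by (simp add: Y.m_assoc)
            also have "\<dots> = inv\<^bsub>Y\<^esub> y2 \<otimes>\<^bsub>Y\<^esub> (y2 \<otimes>\<^bsub>Y\<^esub> y2') \<otimes>\<^bsub>Y\<^esub> inv\<^bsub>Y\<^esub> y1'" using eq by simp
            also have "\<dots> = y2' \<otimes>\<^bsub>Y\<^esub> inv\<^bsub>Y\<^esub> y1'" using m by (simp add: Y.m_assoc[symmetric])
            finally show ?thesis .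
          qed
          have bz: "b y1' y2' \<le> b \<one>\<^bsub>Y\<^esub> (inv\<^bsub>Y\<^esub> y2 \<otimes>\<^bsub>Y\<^esub> y1)" using br[OF m(6) m(8)] z by simp
          have "t (b y1 y2) (b y1' y2') \<le> a (x1 \<otimes>\<^bsub>X\<^esub> \<phi> y1 x1') (x2 \<otimes>\<^bsub>X\<^esub> \<phi> y2 x2')"
            by (rule B[of "inv\<^bsub>Y\<^esub> y2 \<otimes>\<^bsub>Y\<^esub> y1"]) (use m n1 ne bl bz cl in auto)
          then show ?thesis using eq n1 n2 by (simp add: P mS lx)
        next
          case neq: False
          have "t (lex a b p1 p2) (lex a b p1' p2') \<le> t (b y1 y2) (b y1' y2')"
            using q_mono[OF q lexb[OF that(1,2)] lexb[OF that(3,4)]] by (simp add: P)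
          also have "\<dots> \<le> b (y1 \<otimes>\<^bsub>Y\<^esub> y1') (y2 \<otimes>\<^bsub>Y\<^esub> y2')" using vY m unfolding vgroup_def by blast
          finally show ?thesis using neq by (simp add: P mS lx)
        qed
      qed
    qed
    have vS: "vgroup t k ?S (lex a b)" unfolding vgroup_def using grpS vcS compS by blast
    have h1: "vhom X a ?S (lex a b) (inj1 Y)"
      unfolding vhom_def vfunctor_def
      by (auto simp: hom_def inj1_def cS mS lx po)
    have h2: "vhom ?S (lex a b) Y b snd"
      unfolding vhom_def vfunctor_def
      using lexb by (auto simp: hom_def cS mS)
    have h3: "vhom Y b ?S (lex a b) (inj2 X)"
      unfolding vhom_def vfunctor_def
      by (auto simp: hom_def inj2_def cS mS lx p1 atop)
    have ker: "vgrp_kernel TYPE('z) t k X a ?S (lex a b) Y (inj1 Y) snd"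
      unfolding vgrp_kernel_def
    proof (intro conjI allI impI)
      show "\<forall>x\<in>carrier X. snd (inj1 Y x) = \<one>\<^bsub>Y\<^esub>" by (simp add: inj1_def)
    next
      fix Z :: "'z monoid" and d g
      assume A: "vgroup t k Z d \<and> vhom Z d ?S (lex a b) g \<and> (\<forall>z\<in>carrier Z. snd (g z) = \<one>\<^bsub>Y\<^esub>)"
      have gc: "g z \<in> carrier ?S" if "z \<in> carrier Z" for z using A that unfolding vhom_def hom_def by blast
      have gm: "g (z \<otimes>\<^bsub>Z\<^esub> z') = g z \<otimes>\<^bsub>?S\<^esub> g z'" if "z \<in> carrier Z" "z' \<in> carrier Z" for z z'
        using A that unfolding vhom_def hom_def by blast
      have gd: "d z z' \<le> lex a b (g z) (g z')" if "z \<in> carrier Z" "z' \<in> carrier Z" for z z'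
        using A that unfolding vhom_def vfunctor_def by blast
      have gs: "g z = (fst (g z), \<one>\<^bsub>Y\<^esub>)" if "z \<in> carrier Z" for z
        using A that by (metis prod.collapse)
      have fc: "fst (g z) \<in> carrier X" if "z \<in> carrier Z" for z using gc[OF that] by (auto simp: cS)
      show "\<exists>h. vhom Z d X a h \<and> (\<forall>z\<in>carrier Z. inj1 Y (h z) = g z) \<and>
             (\<forall>h'. vhom Z d X a h' \<and> (\<forall>z\<in>carrier Z. inj1 Y (h' z) = g z) \<longrightarrow> (\<forall>z\<in>carrier Z. h' z = h z))"
      proof (intro exI conjI allI impI ballI)
        show "vhom Z d X a (\<lambda>z. fst (g z))"
          unfolding vhom_def vfunctor_def
        proof (intro conjI ballI)
          show "(\<lambda>z. fst (g z)) \<in> hom Z X"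
          proof (rule homI)
            fix z assume "z \<in> carrier Z" thus "fst (g z) \<in> carrier X" by (rule fc)
          next
            fix z z' assume zz: "z \<in> carrier Z" "z' \<in> carrier Z"
            have "g (z \<otimes>\<^bsub>Z\<^esub> z') = (fst (g z), \<one>\<^bsub>Y\<^esub>) \<otimes>\<^bsub>?S\<^esub> (fst (g z'), \<one>\<^bsub>Y\<^esub>)"
              using gm[OF zz] gs[OF zz(1)] gs[OF zz(2)] by simp
            thus "fst (g (z \<otimes>\<^bsub>Z\<^esub> z')) = fst (g z) \<otimes>\<^bsub>X\<^esub> fst (g z')"
              using fc zz by (simp add: mS po)
          qed
        next
          show "(\<lambda>z. fst (g z)) \<in> carrier Z \<rightarrow> carrier X" using fc by blast
        next
          fix z z' assume zz: "z \<in> carrier Z" "z' \<in> carrier Z"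
          show "d z z' \<le> a (fst (g z)) (fst (g z'))"
            using gd[OF zz] gs[OF zz(1)] gs[OF zz(2)] by (metis lx)
        qed
      next
        fix z assume "z \<in> carrier Z" thus "inj1 Y (fst (g z)) = g z" using gs by (simp add: inj1_def)
      next
        fix h' z assume "vhom Z d X a h' \<and> (\<forall>z\<in>carrier Z. inj1 Y (h' z) = g z)" "z \<in> carrier Z"
        thus "h' z = fst (g z)" by (metis fst_conv inj1_def)
      qed
    qed
    show "vgrp_split_ext TYPE('z) t k X a ?S (lex a b) Y b (inj1 Y) snd (inj2 X)"
      unfolding vgrp_split_ext_def using vS h1 h2 h3 ker by (simp add: inj2_def)
  qed
qed

end
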